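(* Let $k\in\{0,1,\dots,n\}$ and $Z=\{\bm z\in\{0,1\}^n:\ \|\bm z\|_1=k\}$, and let $\mathbf 1\in\mathbb R^n$ be the all-ones vector. Then $$P(\mathbf 1)=\{(\bm x,\bm z)\in\mathbb R^n\times[0,1]^n:\ \|\bm x\|_1\le\sqrt k,\ \|\bm z\|_1=k\}.$$
   Context: For $\bm\alpha\in\mathbb R^n$, $P_0(\bm\alpha)=\{(\bm x,\bm z)\in\mathbb R^n\times Z:\ \sum_{i=1}^n|\alpha_ix_i|\le\sqrt{\sum_{i=1}^n\alpha_i^2z_i}\}$ and $P(\bm\alpha)=\operatorname{conv}(P_0(\bm\alpha))$, the convex hull. *)

theory Defs
  imports "HOL-Analysis.Analysis"
begin

definition P0 :: "real^('n::finite) \<Rightarrow> (real^'n) set \<Rightarrow> ((real^'n) \<times> (real^'n)) set" where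
  "P0 \<alpha> Z = {(x, z). z \<in> Z \<and>
      (\<Sum>i\<in>UNIV. \<bar>\<alpha>$i * x$i\<bar>) \<le> sqrt (\<Sum>i\<in>UNIV. (\<alpha>$i)^2 * z$i)}"

definition P :: "real^('n::finite) \<Rightarrow> (real^'n) set \<Rightarrow> ((real^'n) \<times> (real^'n)) set" where
  "P \<alpha> Z = convex hull (P0 \<alpha> Z)"

definition Zk :: "nat \<Rightarrow> (real^('n::finite)) set" where
  "Zk k = {z. (\<forall>i. z$i \<in> {0,1}) \<and> (\<Sum>i\<in>UNIV. \<bar>z$i\<bar>) = real k}"

end

theory Submission
  imports Defs
begin

definition Hk :: "nat \<Rightarrow> (real^('n::finite)) set" where
  "Hk k = {z. (\<forall>i. 0 \<le> z$i \<and> z$i \<le> 1) \<and> (\<Sum>i\<in>UNIV. z$i) = real k}"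

definition B1 :: "nat \<Rightarrow> (real^('n::finite)) set" where
  "B1 k = {x. (\<Sum>i\<in>UNIV. \<bar>x$i\<bar>) \<le> sqrt (real k)}"

lemma Hk_eq: "Hk k = cbox 0 1 \<inter> {z. inner (1::real^'n::finite) z = real k}"
  unfolding Hk_def by (auto simp: mem_box_cart inner_vec_def)

lemma Hk_compact: "compact (Hk k)"
  unfolding Hk_eq by (intro compact_Int_closed compact_cbox closed_hyperplane)

lemma Hk_convex: "convex (Hk k)"
  unfolding Hk_eq by (intro convex_Int convex_box convex_hyperplane)

lemma B1_convex: "convex (B1 k)"
  unfolding convex_def B1_def
proof (clarify)
  fix x y :: "real^'n" and u v :: real
  assume x: "(\<Sum>i\<in>UNIV. \<bar>x$i\<bar>) \<le> sqrt (real k)" and y: "(\<Sum>i\<in>UNIV. \<bar>y$i\<bar>) \<le> sqrt (real k)"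
    and u: "0 \<le> u" and v: "0 \<le> v" and uv: "u + v = 1"
  have "(\<Sum>i\<in>UNIV. \<bar>(u *\<^sub>R x + v *\<^sub>R y)$i\<bar>) \<le> (\<Sum>i\<in>UNIV. u * \<bar>x$i\<bar> + v * \<bar>y$i\<bar>)"
  proof (rule sum_mono)
    fix i :: 'n
    have "\<bar>u * x$i + v * y$i\<bar> \<le> \<bar>u * x$i\<bar> + \<bar>v * y$i\<bar>" by (rule abs_triangle_ineq)
    also have "\<dots> = u * \<bar>x$i\<bar> + v * \<bar>y$i\<bar>" using u v by (simp add: abs_mult)
    finally show "\<bar>(u *\<^sub>R x + v *\<^sub>R y)$i\<bar> \<le> u * \<bar>x$i\<bar> + v * \<bar>y$i\<bar>" by simp
  qed
  also have "\<dots> = u * (\<Sum>i\<in>UNIV. \<bar>x$i\<bar>) + v * (\<Sum>i\<in>UNIV. \<bar>y$i\<bar>)"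
    by (simp add: sum.distrib sum_distrib_left)
  also have "\<dots> \<le> u * sqrt (real k) + v * sqrt (real k)"
    using x y u v by (intro add_mono mult_left_mono) auto
  also have "\<dots> = sqrt (real k)" using uv by (simp add: algebra_simps flip: distrib_right)
  finally show "(\<Sum>i\<in>UNIV. \<bar>(u *\<^sub>R x + v *\<^sub>R y)$i\<bar>) \<le> sqrt (real k)" .
qed

lemma Zk_sub_Hk: "Zk k \<subseteq> Hk k"
proof
  fix z :: "real^'n" assume z: "z \<in> Zk k"
  hence b: "\<And>i. z$i \<in> {0,1}" and s: "(\<Sum>i\<in>UNIV. \<bar>z$i\<bar>) = real k" by (auto simp: Zk_def)
  have "\<And>i. \<bar>z$i\<bar> = z$i" using b by (metis abs_of_nonneg empty_iff insert_iff order_refl zero_le_one)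
  moreover have "\<And>i. 0 \<le> z$i \<and> z$i \<le> 1" using b by (metis empty_iff insert_iff order_refl zero_le_one)
  ultimately show "z \<in> Hk k" using s unfolding Hk_def by auto
qed

lemma other_frac:
  fixes z :: "real^'n::finite"
  assumes "z \<in> Hk k" "0 < z$i" "z$i < 1"
    and nf: "\<forall>j. j \<noteq> i \<longrightarrow> z$j \<in> {0,1}"
  shows False
proof -
  have "(\<Sum>j\<in>UNIV. z$j) = z$i + (\<Sum>j\<in>UNIV-{i}. z$j)"
    by (simp add: sum.remove)
  moreover have "(\<Sum>j\<in>UNIV-{i}. z$j) \<in> \<int>"
    using nf by (intro Ints_sum) auto
  moreover have "(\<Sum>j\<in>UNIV. z$j) = real k" using assms(1) by (simp add: Hk_def)
  ultimately have "z$i \<in> \<int>"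
    by (metis Ints_diff Ints_of_nat add_diff_cancel_right')
  then obtain m :: int where "z$i = of_int m" by (auto elim: Ints_cases)
  with assms(2,3) show False by auto
qed

lemma extreme_Hk:
  fixes z :: "real^'n::finite"
  assumes ext: "z extreme_point_of Hk k"
  shows "z \<in> Zk k"
proof (rule ccontr)
  assume nz: "z \<notin> Zk k"
  have zH: "z \<in> Hk k" using ext by (simp add: extreme_point_of_def)
  hence box: "\<And>l. 0 \<le> z$l \<and> z$l \<le> 1" and s: "(\<Sum>l\<in>UNIV. z$l) = real k" by (auto simp: Hk_def)
  have absz: "\<And>l. \<bar>z$l\<bar> = z$l" using box by simp
  have "\<exists>i. z$i \<notin> {0,1}"
    using nz s absz unfolding Zk_def by auto
  then obtain i where i: "z$i \<notin> {0,1}" by blast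
  hence i01: "0 < z$i" "z$i < 1" using box[of i] by (auto simp: less_le)
  have "\<exists>j. j \<noteq> i \<and> z$j \<notin> {0,1}"
    using other_frac[OF zH i01] by blast
  then obtain j where ji: "j \<noteq> i" and j: "z$j \<notin> {0,1}" by blast
  hence j01: "0 < z$j" "z$j < 1" using box[of j] by (auto simp: less_le)
  define e where "e = min (min (z$i) (1 - z$i)) (min (z$j) (1 - z$j))"
  have e0: "0 < e" using i01 j01 by (simp add: e_def)
  define d :: "real^'n" where "d = (\<chi> l. (if l = i then 1 else 0) - (if l = j then 1 else 0))"
  have dsum: "(\<Sum>l\<in>UNIV. d$l) = 0" by (simp add: d_def sum_subtractf)
  have dl: "\<And>l. d$l = (if l = i then 1 else if l = j then -1 else 0)" using ji by (simp add: d_def)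
  have inH: "z + c *\<^sub>R d \<in> Hk k" if c: "\<bar>c\<bar> \<le> e" for c
  proof -
    have "\<And>l. 0 \<le> (z + c *\<^sub>R d)$l \<and> (z + c *\<^sub>R d)$l \<le> 1"
    proof -
      fix l
      show "0 \<le> (z + c *\<^sub>R d)$l \<and> (z + c *\<^sub>R d)$l \<le> 1"
        using c box[of l] ji i01 j01 unfolding e_def by (auto simp: abs_le_iff dl)
    qed
    moreover have "(\<Sum>l\<in>UNIV. (z + c *\<^sub>R d)$l) = real k"
      using s dsum by (simp add: sum.distrib flip: sum_distrib_left)
    ultimately show ?thesis by (simp add: Hk_def)
  qed
  have a: "z + e *\<^sub>R d \<in> Hk k" using inH e0 by simp
  have b: "z + (-e) *\<^sub>R d \<in> Hk k" using inH[of "-e"] e0 by simp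
  have ne: "z + e *\<^sub>R d \<noteq> z + (-e) *\<^sub>R d"
  proof
    assume "z + e *\<^sub>R d = z + (-e) *\<^sub>R d"
    hence "(z + e *\<^sub>R d)$i = (z + (-e) *\<^sub>R d)$i" by (rule arg_cong)
    hence "e = -e" by (simp add: dl)
    thus False using e0 by simp
  qed
  have mid: "midpoint (z + e *\<^sub>R d) (z + (-e) *\<^sub>R d) = z"
    by (simp add: midpoint_def vec_eq_iff algebra_simps)
  have "z \<in> open_segment (z + e *\<^sub>R d) (z + (-e) *\<^sub>R d)"
    using ne midpoint_in_open_segment mid by metis
  thus False using ext a b by (auto simp: extreme_point_of_def)
qed

lemma hull_Zk: "convex hull (Zk k :: (real^'n::finite) set) = Hk k"
proof
  show "convex hull Zk k \<subseteq> Hk k"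
    by (intro hull_minimal Zk_sub_Hk Hk_convex)
  have "Hk k = convex hull {x. x extreme_point_of (Hk k :: (real^'n) set)}"
    by (rule Krein_Milman_Minkowski[OF Hk_compact Hk_convex])
  also have "\<dots> \<subseteq> convex hull Zk k"
    by (intro hull_mono) (auto intro: extreme_Hk)
  finally show "Hk k \<subseteq> (convex hull Zk k :: (real^'n) set)" .
qed

lemma P0_eq: "P0 (1 :: real^'n::finite) (Zk k) = B1 k \<times> Zk k"
proof -
  have "\<And>z::real^'n. z \<in> Zk k \<Longrightarrow> (\<Sum>i\<in>UNIV. z$i) = real k"
  proof -
    fix z :: "real^'n" assume "z \<in> Zk k"
    hence "z \<in> Hk k" using Zk_sub_Hk by blast
    thus "(\<Sum>i\<in>UNIV. z$i) = real k" by (simp add: Hk_def)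
  qed
  thus ?thesis unfolding P0_def B1_def by auto
qed

theorem mainTheorem7:
  fixes k :: nat
  assumes "k \<le> CARD('n)"
  shows "P (1 :: real^'n) (Zk k) =
    {(x, z). (\<forall>i. 0 \<le> z$i \<and> z$i \<le> 1) \<and>
             (\<Sum>i\<in>UNIV. \<bar>x$i\<bar>) \<le> sqrt (real k) \<and>
             (\<Sum>i\<in>UNIV. \<bar>z$i\<bar>) = real k}"
proof -
  have cb: "convex hull B1 k = (B1 k :: (real^'n) set)"
    using convex_hull_eq B1_convex by blast
  have "P (1 :: real^'n) (Zk k) = B1 k \<times> Hk k"
    unfolding P_def P0_eq convex_hull_Times hull_Zk
    using cb by simp
  also have "\<dots> = {(x, z). (\<forall>i. 0 \<le> z$i \<and> z$i \<le> 1) \<and>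
             (\<Sum>i\<in>UNIV. \<bar>x$i\<bar>) \<le> sqrt (real k) \<and>
             (\<Sum>i\<in>UNIV. \<bar>z$i\<bar>) = real k}"
  proof -
    have "\<And>z::real^'n. (\<forall>i. 0 \<le> z$i \<and> z$i \<le> 1) \<Longrightarrow> (\<Sum>i\<in>UNIV. \<bar>z$i\<bar>) = (\<Sum>i\<in>UNIV. z$i)"
      by simp
    thus ?thesis unfolding B1_def Hk_def by auto
  qed
  finally show ?thesis .
qed

end
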